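(* Let $X$ be a compact Hausdorff space containing at least $n+1$ points, where $n\ge1$, and let $H\subset C(X)$ be an $n$-dimensional Haar subspace, where $C(X)$ is the space of real-valued continuous functions on $X$ with norm $\|f\|=\max_{x\in X}|f(x)|$. Let $A$ be a compact Hausdorff space and $\{f_a\}_{a\in A}\subset C(X)$ with $a\mapsto f_a$ continuous from $A$ into $C(X)$. Let $f^*\in H$ be a best simultaneous approximation to $\{f_a\}$ from $H$ (i.e. $\max_{a\in A}\|f_a-f^*\|\le\max_{a\in A}\|f_a-f\|$ for all $f\in H$) and suppose there exist an integer $k$ with $1\le k\le n+1$, elements $a_1,\dots,a_k\in A$, points $x_1,\dots,x_k\in X$, and positive numbers $\lambda_1,\dots,\lambda_k$ with $\sum_{i=1}^k\lambda_i=1$ such that (i') $\sum_{i=1}^k\lambda_i\,(f_{a_i}(x_i)-f^*(x_i))\,f(x_i)=0$ for all $f\in H$, and (ii) $|f_{a_i}(x_i)-f^*(x_i)|=\|f_{a_i}-f^*\|=\max_{a\in A}\|f_a-f^*\|$ for all $1\le i\le k$. If the points $x_1,\dots,x_k$ are pairwise distinct and the common value in (ii) is nonzero, then there exists $\gamma>0$ such that $$\max_{a\in A}\|f_a-h\|\ge\max_{a\in A}\|f_a-f^*\|+\gamma\|f^*-h\|\quad\text{for all } h\in H.$$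
   Context: An $n$-dimensional subspace $H\subset C(X)$ is a Haar subspace if for any $n$ distinct points $x_1,\dots,x_n\in X$ and any real numbers $r_1,\dots,r_n$ there is a unique $f\in H$ with $f(x_j)=r_j$ for $1\le j\le n$. *)

theory Defs
  imports "HOL-Analysis.Analysis"
begin

text \<open>C(X) for a compact Hausdorff space X (the type 'x with compact UNIV) is represented
by the bounded continuous functions of type bcontfun, whose norm is the sup norm.\<close>

definition haar_subspace :: "('x::topological_space \<Rightarrow>\<^sub>C real) set \<Rightarrow> nat \<Rightarrow> bool" where
  "haar_subspace H n \<longleftrightarrow> subspace H \<and> dim H = n \<and>
     (\<forall>xs::nat \<Rightarrow> 'x. inj_on xs {..<n} \<longrightarrow>
        (\<forall>r::nat \<Rightarrow> real. \<exists>!f. f \<in> H \<and> (\<forall>j<n. apply_bcontfun f (xs j) = r j)))"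

end

theory Submission
  imports Defs
begin

lemma bcf_sum_apply:
  "apply_bcontfun (sum f A) x = (\<Sum>i\<in>A. apply_bcontfun (f i) x)"
  by (induction A rule: infinite_finite_induct) auto

lemma bcf_abs_le: "\<bar>apply_bcontfun (f::'x::topological_space \<Rightarrow>\<^sub>C real) x\<bar> \<le> norm f"
  using norm_bounded[of f x] by simp

theorem theorem4:
  fixes F :: "'a::t2_space \<Rightarrow> ('x::t2_space \<Rightarrow>\<^sub>C real)"
    and H :: "('x \<Rightarrow>\<^sub>C real) set"
    and n k :: nat
    and fs :: "'x \<Rightarrow>\<^sub>C real"
    and as :: "nat \<Rightarrow> 'a" and xs :: "nat \<Rightarrow> 'x" and lam :: "nat \<Rightarrow> real"
  assumes "compact (UNIV :: 'x set)"
    and "\<exists>S :: 'x set. finite S \<and> card S = n + 1"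
    and "n \<ge> 1"
    and "haar_subspace H n"
    and "compact (UNIV :: 'a set)"
    and "continuous_on UNIV F"
    and "fs \<in> H"
    and "\<forall>f\<in>H. (SUP a. norm (F a - fs)) \<le> (SUP a. norm (F a - f))"
    and "1 \<le> k" and "k \<le> n + 1"
    and "\<forall>i<k. lam i > 0"
    and "(\<Sum>i<k. lam i) = 1"
    and "\<forall>f\<in>H. (\<Sum>i<k. lam i * (apply_bcontfun (F (as i)) (xs i) - apply_bcontfun fs (xs i))
                       * apply_bcontfun f (xs i)) = 0"
    and "\<forall>i<k. \<bar>apply_bcontfun (F (as i)) (xs i) - apply_bcontfun fs (xs i)\<bar> = norm (F (as i) - fs)
              \<and> norm (F (as i) - fs) = (SUP a. norm (F a - fs))"
    and "inj_on xs {..<k}"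
    and "(SUP a. norm (F a - fs)) \<noteq> 0"
  shows "\<exists>\<gamma>>0. \<forall>h\<in>H. (SUP a. norm (F a - h)) \<ge> (SUP a. norm (F a - fs)) + \<gamma> * norm (fs - h)"
proof -
  define E where "E = (SUP a. norm (F a - fs))"
  define e where "e i = apply_bcontfun (F (as i)) (xs i) - apply_bcontfun fs (xs i)" for i
  have sub: "subspace H" and haar: "\<forall>ys::nat \<Rightarrow> 'x. inj_on ys {..<n} \<longrightarrow>
        (\<forall>r::nat \<Rightarrow> real. \<exists>!f. f \<in> H \<and> (\<forall>j<n. apply_bcontfun f (ys j) = r j))"
    using assms(4) unfolding haar_subspace_def by auto
  have eabs: "\<And>i. i < k \<Longrightarrow> \<bar>e i\<bar> = E"
    using assms(14) unfolding e_def E_def by auto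
  have Epos: "E > 0"
  proof -
    have "\<bar>e 0\<bar> = E" using eabs assms(9) by auto
    then show ?thesis using assms(16) unfolding E_def by auto
  qed
  have lampos: "\<And>i. i < k \<Longrightarrow> lam i > 0" using assms(11) by auto
  have bdd: "\<And>h. bdd_above (range (\<lambda>a. norm (F a - h)))"
  proof -
    fix h
    have "compact (F ` UNIV)" using compact_continuous_image[OF assms(6) assms(5)] .
    then have "bounded (F ` UNIV)" by (rule compact_imp_bounded)
    then obtain B where B: "\<And>a. norm (F a) \<le> B" by (auto simp: bounded_iff)
    have "\<And>a. norm (F a - h) \<le> B + norm h"
      using B norm_triangle_ineq4[of "F _" h] by (meson add_mono order_trans order_refl)
    then show "bdd_above (range (\<lambda>a. norm (F a - h)))" by (intro bdd_aboveI2) blast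
  qed
  have knp: "k = n + 1"
  proof (rule ccontr)
    assume "k \<noteq> n + 1"
    then have kn: "k \<le> n" using assms(10) by auto
    obtain S :: "'x set" where S: "finite S" "card S = n + 1" using assms(2) by auto
    define T where "T = S - xs ` {..<k}"
    have fT: "finite T" using S unfolding T_def by auto
    have "card S \<le> card (T \<union> xs ` {..<k})" using S by (intro card_mono) (auto simp: T_def)
    also have "\<dots> \<le> card T + card (xs ` {..<k})" by (rule card_Un_le)
    also have "\<dots> \<le> card T + k" using card_image_le[of "{..<k}" xs] by auto
    finally have cT: "n - k \<le> card T" using S by auto
    obtain e' where e': "bij_betw e' {0..<card T} T" using ex_bij_betw_nat_finite[OF fT] by auto
    define ys where "ys i = (if i < k then xs i else e' (i - k))" for i
    have "inj_on ys {..<n}"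
    proof (rule inj_onI)
      fix i j assume ij: "i \<in> {..<n}" "j \<in> {..<n}" "ys i = ys j"
      have inT: "\<And>m. m \<in> {..<n} \<Longrightarrow> \<not> m < k \<Longrightarrow> e' (m - k) \<in> T"
        using e' cT unfolding bij_betw_def by auto
      show "i = j"
      proof (cases "i < k"; cases "j < k")
        assume "i < k" "j < k" then show ?thesis using ij assms(15) unfolding ys_def
          by (auto dest: inj_onD)
      next
        assume a: "i < k" "\<not> j < k"
        have "ys i \<in> xs ` {..<k}" using a unfolding ys_def by auto
        moreover have "ys j \<in> T" using a ij inT[of j] unfolding ys_def by auto
        ultimately show ?thesis using ij unfolding T_def by auto
      next
        assume a: "\<not> i < k" "j < k"
        have "ys j \<in> xs ` {..<k}" using a unfolding ys_def by auto
        moreover have "ys i \<in> T" using a ij inT[of i] unfolding ys_def by auto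
        ultimately show ?thesis using ij unfolding T_def by auto
      next
        assume a: "\<not> i < k" "\<not> j < k"
        have "e' (i - k) = e' (j - k)" using ij a unfolding ys_def by auto
        moreover have "i - k \<in> {0..<card T}" "j - k \<in> {0..<card T}" using ij a cT by auto
        ultimately have "i - k = j - k" using e' unfolding bij_betw_def by (auto dest: inj_onD)
        then show ?thesis using a by auto
      qed
    qed
    then obtain f where f: "f \<in> H" "\<forall>j<n. apply_bcontfun f (ys j) = (if j = 0 then 1 else 0)"
    proof -
      from haar[rule_format, OF \<open>inj_on ys {..<n}\<close>, of "\<lambda>j. if j = 0 then 1 else 0"]
      show ?thesis by (elim ex1E conjE) (erule that, assumption)
    qed
    have "(\<Sum>i<k. lam i * e i * apply_bcontfun f (xs i)) =
          (\<Sum>i<k. if i = 0 then lam 0 * e 0 else 0)"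
    proof (rule sum.cong)
      fix i assume i: "i \<in> {..<k}"
      then have "apply_bcontfun f (xs i) = (if i = 0 then 1 else 0)"
        using f(2)[rule_format, of i] kn unfolding ys_def by auto
      then show "lam i * e i * apply_bcontfun f (xs i) = (if i = 0 then lam 0 * e 0 else 0)" by auto
    qed simp
    also have "\<dots> = lam 0 * e 0" using assms(9) by simp
    finally have "lam 0 * e 0 = 0" using assms(13) f(1) unfolding e_def by auto
    moreover have "lam 0 > 0" "e 0 \<noteq> 0" using lampos eabs[of 0] Epos assms(9) by auto
    ultimately show False by simp
  qed
  have injn: "inj_on xs {..<n}" using assms(15) knp by (auto intro: inj_on_subset)
  have "\<forall>j\<in>{..<n}. \<exists>b. b \<in> H \<and> (\<forall>i<n. apply_bcontfun b (xs i) = (if i = j then 1 else 0))"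
  proof
    fix j assume "j \<in> {..<n}"
    from haar[rule_format, OF injn, of "\<lambda>i. if i = j then 1 else 0"]
    show "\<exists>b. b \<in> H \<and> (\<forall>i<n. apply_bcontfun b (xs i) = (if i = j then 1 else 0))"
      by (elim ex1E) (intro exI)
  qed
  then obtain b where b0: "\<forall>j\<in>{..<n}. b j \<in> H \<and> (\<forall>i<n. apply_bcontfun (b j) (xs i) = (if i = j then 1 else 0))"
    by (rule bchoice[THEN exE])
  then have b: "\<And>j. j < n \<Longrightarrow> b j \<in> H"
    "\<And>j i. j < n \<Longrightarrow> i < n \<Longrightarrow> apply_bcontfun (b j) (xs i) = (if i = j then 1 else 0)"
    by auto
  have expand: "g = (\<Sum>j<n. apply_bcontfun g (xs j) *\<^sub>R b j)" if g: "g \<in> H" for g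
  proof -
    have ex1: "\<exists>!f. f \<in> H \<and> (\<forall>j<n. apply_bcontfun f (xs j) = apply_bcontfun g (xs j))"
      using haar[rule_format, OF injn, of "\<lambda>j. apply_bcontfun g (xs j)"] .
    have "(\<Sum>j<n. apply_bcontfun g (xs j) *\<^sub>R b j) \<in> H"
      using sub b(1) by (intro subspace_sum subspace_scale) auto
    moreover have "\<forall>i<n. apply_bcontfun (\<Sum>j<n. apply_bcontfun g (xs j) *\<^sub>R b j) (xs i)
        = apply_bcontfun g (xs i)"
    proof (intro allI impI)
      fix i assume i: "i < n"
      have "apply_bcontfun (\<Sum>j<n. apply_bcontfun g (xs j) *\<^sub>R b j) (xs i)
          = (\<Sum>j<n. if j = i then apply_bcontfun g (xs j) else 0)"
        unfolding bcf_sum_apply using b(2) i by (intro sum.cong) auto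
      also have "\<dots> = apply_bcontfun g (xs i)" using i by simp
      finally show "apply_bcontfun (\<Sum>j<n. apply_bcontfun g (xs j) *\<^sub>R b j) (xs i)
        = apply_bcontfun g (xs i)" .
    qed
    moreover have "\<forall>j<n. apply_bcontfun g (xs j) = apply_bcontfun g (xs j)" by simp
    ultimately show ?thesis using ex1 g by (elim ex1E) (metis (no_types, lifting))
  qed
  have normbound: "norm g \<le> (\<Sum>j<n. \<bar>apply_bcontfun g (xs j)\<bar> * norm (b j))" if "g \<in> H" for g
  proof -
    have "norm g = norm (\<Sum>j<n. apply_bcontfun g (xs j) *\<^sub>R b j)" using expand[OF that] by simp
    also have "\<dots> \<le> (\<Sum>j<n. norm (apply_bcontfun g (xs j) *\<^sub>R b j))" by (rule norm_sum)
    finally show ?thesis by simp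
  qed
  define K where "K = (\<Sum>j<n. norm (b j) / lam j)"
  have K0: "K \<ge> 0" unfolding K_def using lampos knp by (intro sum_nonneg) (auto intro: divide_nonneg_pos)
  show ?thesis
  proof (intro exI[of _ "1 / (K + 1)"] conjI ballI)
    show "1 / (K + 1) > 0" using K0 by auto
    fix h assume h: "h \<in> H"
    define g where "g = fs - h"
    have gH: "g \<in> H" unfolding g_def using sub assms(7) h by (rule subspace_diff)
    define t where "t i = e i * apply_bcontfun g (xs i) / E" for i
    have "(\<Sum>i<k. lam i * e i * apply_bcontfun g (xs i)) = 0"
      using assms(13) gH unfolding e_def by auto
    then have sum0: "(\<Sum>i<k. lam i * t i) = 0"
      unfolding t_def by (simp add: sum_divide_distrib[symmetric] mult.assoc)
    define M where "M = Max (t ` {..<k})"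
    have tM: "\<And>i. i < k \<Longrightarrow> t i \<le> M" unfolding M_def by (intro Max_ge) auto
    have "M \<in> t ` {..<k}" unfolding M_def using assms(9) by (intro Max_in) (auto simp: lessThan_empty_iff)
    then obtain i0 where i0: "i0 < k" "t i0 = M" by auto
    have "0 = (\<Sum>i<k. lam i * t i)" using sum0 by simp
    also have "\<dots> \<le> (\<Sum>i<k. lam i * M)"
      using tM lampos by (intro sum_mono mult_left_mono) (auto intro: less_imp_le)
    also have "\<dots> = M" using assms(12) by (simp add: sum_distrib_right[symmetric])
    finally have M0: "M \<ge> 0" .
    have tabs: "\<bar>t j\<bar> \<le> M / lam j" if j: "j < k" for j
    proof -
      have fin: "finite {..<k}" and jin: "j \<in> {..<k}" using j by auto
      have rest: "(\<Sum>i\<in>{..<k}-{j}. lam i) = 1 - lam j"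
        using sum.remove[OF fin jin, of lam] assms(12) by simp
      have "(\<Sum>i\<in>{..<k}-{j}. lam i) \<ge> 0" using lampos by (intro sum_nonneg) (auto intro: less_imp_le)
      then have lj1: "lam j \<le> 1" using rest by simp
      have "0 = lam j * t j + (\<Sum>i\<in>{..<k}-{j}. lam i * t i)"
        using sum.remove[OF fin jin, of "\<lambda>i. lam i * t i"] sum0 by simp
      moreover have "(\<Sum>i\<in>{..<k}-{j}. lam i * t i) \<le> (\<Sum>i\<in>{..<k}-{j}. lam i * M)"
        using tM lampos by (intro sum_mono mult_left_mono) (auto intro: less_imp_le)
      moreover have "(\<Sum>i\<in>{..<k}-{j}. lam i * M) = (1 - lam j) * M"
        using rest by (simp add: sum_distrib_right[symmetric])
      moreover have "lam j * M \<ge> 0" using lampos[OF j] M0 by simp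
      ultimately have low: "lam j * t j \<ge> - M" by (simp add: algebra_simps)
      have lp: "lam j > 0" using lampos[OF j] .
      have "lam j * t j \<le> lam j * M" using tM[OF j] lp by (intro mult_left_mono) auto
      also have "\<dots> \<le> 1 * M" using lj1 M0 by (intro mult_right_mono) auto
      finally have "lam j * t j \<le> M" by simp
      then have "lam j * \<bar>t j\<bar> \<le> M" using low lp by (auto simp: abs_if)
      then show ?thesis using lp by (simp add: field_simps)
    qed
    have tg: "\<bar>t j\<bar> = \<bar>apply_bcontfun g (xs j)\<bar>" if "j < k" for j
      using eabs[OF that] Epos unfolding t_def by (simp add: abs_mult)
    have "norm g \<le> (\<Sum>j<n. \<bar>apply_bcontfun g (xs j)\<bar> * norm (b j))" by (rule normbound[OF gH])
    also have "\<dots> \<le> (\<Sum>j<n. M / lam j * norm (b j))"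
      using tabs tg knp by (intro sum_mono mult_right_mono) auto
    also have "\<dots> = M * K" unfolding K_def by (simp add: sum_distrib_left)
    also have "\<dots> \<le> M * (K + 1)" using M0 by (simp add: algebra_simps)
    finally have ng: "1 / (K + 1) * norm g \<le> M" using K0 by (simp add: field_simps)
    have eq: "apply_bcontfun (F (as i0) - h) (xs i0) = e i0 + apply_bcontfun g (xs i0)"
      unfolding e_def g_def by simp
    have e2: "e i0 * e i0 = E * E" using eabs[OF i0(1)] by (metis abs_mult_self_eq)
    have "E + M = e i0 / E * (e i0 + apply_bcontfun g (xs i0))"
      using i0(2) e2 Epos unfolding t_def by (simp add: field_simps)
    also have "\<dots> \<le> \<bar>e i0 / E\<bar> * \<bar>e i0 + apply_bcontfun g (xs i0)\<bar>"
      by (metis abs_ge_self abs_mult)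
    also have "\<dots> = \<bar>e i0 + apply_bcontfun g (xs i0)\<bar>" using eabs[OF i0(1)] Epos by simp
    also have "\<dots> \<le> norm (F (as i0) - h)" using bcf_abs_le[of "F (as i0) - h" "xs i0"] eq by simp
    also have "\<dots> \<le> (SUP a. norm (F a - h))" by (rule cSUP_upper[OF _ bdd]) simp
    finally show "(SUP a. norm (F a - fs)) + 1 / (K + 1) * norm (fs - h) \<le> (SUP a. norm (F a - h))"
      using ng unfolding E_def g_def by linarith
  qed
qed

end
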